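(* Let $T>0$, $0<M\le2$, $N=2$, and consider the problem of minimizing $\mathbb V(T)=\frac12(\xi_1(T)^2+\xi_2(T)^2)$ over $\alpha\in\mathcal U_M$, where $\dot\xi_i=-\xi_i+(1-\alpha_i)\bar\xi$ ($i=1,2$), $\bar\xi=\frac12(\xi_1+\xi_2)$, with initial datum satisfying $\bar\xi(0)>0$. If $\xi_1(0)=\xi_2(0)$, then a control $\alpha\in\mathcal U_M$ is optimal if and only if $\alpha_1+\alpha_2\equiv M$ and $\xi_1(T)=\xi_2(T)$.
   Context: $\mathcal U_M$ is the set of measurable $\alpha:[0,T]\to[0,1]^2$ with $\alpha_1(t)+\alpha_2(t)\le M$ for all $t$; "$\equiv$" means equality for (almost) all $t\in[0,T]$. *)

theory Defs
  imports "HOL-Analysis.Analysis"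
begin

definition admissible :: "real \<Rightarrow> real \<Rightarrow> (real \<Rightarrow> real) \<Rightarrow> (real \<Rightarrow> real) \<Rightarrow> bool" where
  "admissible T M a1 a2 \<longleftrightarrow>
     set_borel_measurable lborel {0..T} a1 \<and> set_borel_measurable lborel {0..T} a2 \<and>
     (\<forall>t\<in>{0..T}. 0 \<le> a1 t \<and> a1 t \<le> 1 \<and> 0 \<le> a2 t \<and> a2 t \<le> 1 \<and> a1 t + a2 t \<le> M)"

definition is_traj :: "real \<Rightarrow> (real \<Rightarrow> real) \<Rightarrow> (real \<Rightarrow> real) \<Rightarrow> real \<Rightarrow> real \<Rightarrow>
    (real \<Rightarrow> real) \<Rightarrow> (real \<Rightarrow> real) \<Rightarrow> bool" where
  "is_traj T a1 a2 x1 x2 \<xi>1 \<xi>2 \<longleftrightarrow>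
     \<xi>1 0 = x1 \<and> \<xi>2 0 = x2 \<and>
     continuous_on {0..T} \<xi>1 \<and> continuous_on {0..T} \<xi>2 \<and>
     (\<forall>t\<in>{0..T}.
        ((\<lambda>s. - \<xi>1 s + (1 - a1 s) * ((\<xi>1 s + \<xi>2 s) / 2)) has_integral (\<xi>1 t - x1)) {0..t} \<and>
        ((\<lambda>s. - \<xi>2 s + (1 - a2 s) * ((\<xi>1 s + \<xi>2 s) / 2)) has_integral (\<xi>2 t - x2)) {0..t})"

definition cost :: "real \<Rightarrow> (real \<Rightarrow> real) \<Rightarrow> (real \<Rightarrow> real) \<Rightarrow> real" where
  "cost T \<xi>1 \<xi>2 = ((\<xi>1 T)^2 + (\<xi>2 T)^2) / 2"

definition optimal :: "real \<Rightarrow> real \<Rightarrow> real \<Rightarrow> real \<Rightarrow> (real \<Rightarrow> real) \<Rightarrow> (real \<Rightarrow> real) \<Rightarrow> bool" where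
  "optimal T M x1 x2 a1 a2 \<longleftrightarrow> admissible T M a1 a2 \<and>
     (\<forall>\<xi>1 \<xi>2 b1 b2 \<eta>1 \<eta>2. is_traj T a1 a2 x1 x2 \<xi>1 \<xi>2 \<and> admissible T M b1 b2 \<and>
        is_traj T b1 b2 x1 x2 \<eta>1 \<eta>2 \<longrightarrow> cost T \<xi>1 \<xi>2 \<le> cost T \<eta>1 \<eta>2)"

end

theory Submission
  imports Defs
begin

lemma core:
  fixes Y y p :: "real \<Rightarrow> real" and K cc P \<tau> :: real
  assumes K: "K > 0" and \<tau>: "\<tau> \<ge> 0"
    and dY: "\<And>t. t \<in> {0..\<tau>} \<Longrightarrow> (Y has_real_derivative y t) (at t within {0..\<tau>})"
    and Y0: "Y 0 = 0"
    and rel: "\<And>t. t \<in> {0..\<tau>} \<Longrightarrow> y t = cc - K * Y t + p t"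
    and pb: "\<And>t. t \<in> {0..\<tau>} \<Longrightarrow> p t \<le> P"
  shows "K * Y \<tau> \<le> (cc + P) * (1 - exp (-K*\<tau>))"
proof -
  define H where "H t = Y t * exp (K*t) - (cc+P) * (exp (K*t) - 1) / K" for t
  have dH: "(H has_vector_derivative ((p t - P) * exp (K*t))) (at t within {0..\<tau>})"
    if t: "t \<in> {0..\<tau>}" for t
  proof -
    have "(H has_real_derivative (y t * exp (K*t) + Y t * (exp (K*t) * K) - (cc+P) * (exp (K*t) * K) / K)) (at t within {0..\<tau>})"
      unfolding H_def[abs_def]
      using dY[OF t] K by (auto intro!: derivative_eq_intros)
    moreover have "y t * exp (K*t) + Y t * (exp (K*t) * K) - (cc+P) * (exp (K*t) * K) / K
       = (p t - P) * exp (K*t)"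
      using K by (simp add: rel[OF t] field_simps)
    ultimately show ?thesis by (simp add: has_real_derivative_iff_has_vector_derivative)
  qed
  have I: "((\<lambda>t. (p t - P) * exp (K*t)) has_integral (H \<tau> - H 0)) {0..\<tau>}"
    by (rule fundamental_theorem_of_calculus[OF \<tau> dH])
  have "H \<tau> - H 0 \<le> 0"
    using has_integral_le[OF I has_integral_0] pb by (simp add: mult_nonpos_nonneg)
  hence "Y \<tau> * exp (K*\<tau>) \<le> (cc+P) * (exp (K*\<tau>) - 1) / K"
    using Y0 by (simp add: H_def)
  hence "K * Y \<tau> * exp (K*\<tau>) \<le> (cc+P) * (exp (K*\<tau>) - 1)"
    using K by (simp add: field_simps)
  hence "K * Y \<tau> * exp (K*\<tau>) * exp (-K*\<tau>) \<le> (cc+P) * (exp (K*\<tau>) - 1) * exp (-K*\<tau>)"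
    by (simp add: mult_right_mono)
  moreover have "exp (K*\<tau>) * exp (-K*\<tau>) = 1" by (simp add: exp_minus field_simps)
  ultimately show ?thesis by (simp add: algebra_simps)
qed

lemma bound:
  fixes y g :: "real \<Rightarrow> real" and K T y0 :: real
  assumes K: "K > 0" and T: "T \<ge> 0"
    and cy: "continuous_on {0..T} y"
    and hi: "\<And>t. t \<in> {0..T} \<Longrightarrow> ((\<lambda>s. - (g s * y s)) has_integral (y t - y0)) {0..t}"
    and g: "\<And>t. t \<in> {0..T} \<Longrightarrow> 0 \<le> g t \<and> g t \<le> K"
    and y0: "y0 > 0"
  shows "(\<forall>t\<in>{0..T}. y t > 0) \<and> ((\<lambda>s. (K - g s) * y s) has_integral integral {0..T} (\<lambda>s. (K - g s) * y s)) {0..T}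
     \<and> y T \<ge> (y0 + integral {0..T} (\<lambda>s. (K - g s) * y s)) * exp (-K*T)
     \<and> integral {0..T} (\<lambda>s. (K - g s) * y s) \<ge> 0
     \<and> (integral {0..T} (\<lambda>s. (K - g s) * y s) = 0 \<longrightarrow> y T \<le> y0 * exp (-K*T))"
proof -
  define h where "h = (\<lambda>s. (K - g s) * y s)"
  define Y where "Y t = integral {0..t} y" for t
  define p where "p t = integral {0..t} h" for t
  have yI: "(y has_integral Y t) {0..t}" if t: "t \<in> {0..T}" for t
  proof -
    have "continuous_on {0..t} y" using cy t by (auto intro: continuous_on_subset)
    then show ?thesis unfolding Y_def by (intro integrable_integral integrable_continuous_interval)
  qed
  have hfun: "(\<lambda>s. K * y s + - (g s * y s)) = h" by (auto simp: h_def algebra_simps fun_eq_iff)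
  have hI: "(h has_integral (K * Y t + (y t - y0))) {0..t}" if t: "t \<in> {0..T}" for t
    using has_integral_add[OF has_integral_mult_right[OF yI[OF t], of K] hi[OF t]] hfun by simp
  have prel: "p t = K * Y t + (y t - y0)" if t: "t \<in> {0..T}" for t
    using hI[OF t] unfolding p_def by (rule integral_unique)
  have dYt: "(Y has_real_derivative y t) (at t within {0..\<tau>})" if "\<tau> \<in> {0..T}" "t \<in> {0..\<tau>}" for \<tau> t
  proof -
    have "continuous_on {0..\<tau>} y" using cy that by (auto intro: continuous_on_subset)
    from integral_has_vector_derivative[OF this that(2)] show ?thesis
      unfolding Y_def[abs_def] has_real_derivative_iff_has_vector_derivative .
  qed
  have Y0: "Y 0 = 0" by (simp add: Y_def)
  have p0: "p 0 = 0" by (simp add: p_def)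
  have mono: "p t \<le> p \<tau>" if \<tau>: "\<tau> \<in> {0..T}" and nn: "\<forall>t\<in>{0..\<tau>}. y t \<ge> 0" and t: "t \<in> {0..\<tau>}" for \<tau> t
  proof -
    have hint: "h integrable_on {0..\<tau>}" using hI[OF \<tau>] by blast
    have c: "integral {0..t} h + integral {t..\<tau>} h = integral {0..\<tau>} h"
      using t hint by (intro Henstock_Kurzweil_Integration.integral_combine) auto
    have "h integrable_on {t..\<tau>}" using hint t by (intro integrable_subinterval_real[OF hint]) auto
    moreover have "\<And>x. x \<in> {t..\<tau>} \<Longrightarrow> 0 \<le> h x"
      using g nn t \<tau> unfolding h_def by (auto intro!: mult_nonneg_nonneg)
    ultimately have "integral {t..\<tau>} h \<ge> 0" by (intro integral_nonneg) auto
    with c show ?thesis unfolding p_def by linarith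
  qed
  have est: "y \<tau> \<ge> (y0 + p \<tau>) * exp (-K*\<tau>) \<and> p \<tau> \<ge> 0"
    if \<tau>: "\<tau> \<in> {0..T}" and nn: "\<forall>t\<in>{0..\<tau>}. y t \<ge> 0" for \<tau>
  proof -
    have "K * Y \<tau> \<le> (y0 + p \<tau>) * (1 - exp (-K*\<tau>))"
    proof (rule core[where Y=Y and y=y and p=p and \<tau>=\<tau> and K=K and cc=y0, OF K])
      show "0 \<le> \<tau>" using \<tau> by auto
      show "(Y has_real_derivative y t) (at t within {0..\<tau>})" if "t \<in> {0..\<tau>}" for t
        using dYt[OF \<tau> that] .
      show "y t = y0 - K * Y t + p t" if "t \<in> {0..\<tau>}" for t
        using prel[of t] that \<tau> by auto
      show "p t \<le> p \<tau>" if "t \<in> {0..\<tau>}" for t using mono[OF \<tau> nn that] .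
      show "Y 0 = 0" by (rule Y0)
    qed
    moreover have "y \<tau> = y0 - K * Y \<tau> + p \<tau>" using prel[OF \<tau>] by simp
    moreover have "p 0 \<le> p \<tau>" using mono[OF \<tau> nn, of 0] \<tau> by auto
    ultimately show ?thesis using p0 by (simp add: algebra_simps)
  qed
  have pos: "\<forall>t\<in>{0..T}. y t > 0"
  proof (rule ccontr)
    assume "\<not> (\<forall>t\<in>{0..T}. y t > 0)"
    then obtain t1 where t1: "t1 \<in> {0..T}" "y t1 \<le> 0" by auto
    have y00: "y 0 = y0" proof - have "((\<lambda>s. - (g s * y s)) has_integral (y 0 - y0)) {0..0}" using hi[of 0] T by simp then have "y 0 - y0 = 0" by (metis has_integral_refl(2) has_integral_unique atLeastAtMost_singleton) then show ?thesis by simp qed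
    have ivt: "\<exists>z. 0 \<le> z \<and> z \<le> t \<and> y z = 0" if "t \<in> {0..T}" "y t \<le> 0" for t
    proof (rule IVT2')
      show "continuous_on {0..t} y" using cy that by (auto intro: continuous_on_subset)
    qed (use that y00 y0 in auto)
    define Z where "Z = {x \<in> {0..T}. y x = 0}"
    have cZ: "closed Z" unfolding Z_def by (intro continuous_closed_preimage_constant cy) auto
    obtain z1 where z1: "0 \<le> z1" "z1 \<le> t1" "y z1 = 0" using ivt[OF t1] by blast
    have "z1 \<in> Z" using z1 t1 unfolding Z_def by auto
    then have nZ: "Z \<noteq> {}" by blast
    have bZ: "bdd_below Z" unfolding Z_def by (auto intro: bdd_belowI[of _ 0])
    define ts where "ts = Inf Z"
    have tsZ: "ts \<in> Z" unfolding ts_def by (rule closed_contains_Inf[OF nZ bZ cZ])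
    have nn: "\<forall>t\<in>{0..ts}. y t \<ge> 0"
    proof (intro ballI, rule ccontr)
      fix t assume t: "t \<in> {0..ts}" and "\<not> 0 \<le> y t"
      hence yt: "y t < 0" by simp
      have tT: "t \<in> {0..T}" using t tsZ unfolding Z_def by auto
      obtain z where z: "0 \<le> z" "z \<le> t" "y z = 0" using ivt[OF tT] yt by auto
      have "z \<in> Z" using z tT unfolding Z_def by auto
      hence "ts \<le> z" unfolding ts_def by (rule cInf_lower[OF _ bZ])
      hence "z = t" using z t by auto
      thus False using z yt by simp
    qed
    have tsT: "ts \<in> {0..T}" and yts: "y ts = 0" using tsZ unfolding Z_def by auto
    from est[OF tsT nn] have "y ts \<ge> (y0 + p ts) * exp (-K*ts)" "p ts \<ge> 0" by auto
    moreover have "(y0 + p ts) * exp (-K*ts) > 0" using y0 \<open>p ts \<ge> 0\<close> by (intro mult_pos_pos) auto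
    ultimately show False using yts by linarith
  qed
  have nnT: "\<forall>t\<in>{0..T}. y t \<ge> 0" using pos less_imp_le by blast
  have TT: "T \<in> {0..T}" using T by auto
  have last: "y T \<le> y0 * exp (-K*T)" if pT: "p T = 0"
  proof -
    have pz: "p t = 0" if t: "t \<in> {0..T}" for t
    proof -
      have "p t \<le> p T" using mono[OF TT nnT t] .
      moreover have "p t \<ge> 0" using est[of t] nnT t by auto
      ultimately show ?thesis using pT by simp
    qed
    have "K * (- Y T) \<le> (- y0 + 0) * (1 - exp (-K*T))"
    proof (rule core[OF K T, where cc="-y0" and p="\<lambda>_. 0" and y="\<lambda>t. - y t"])
      show "((\<lambda>t. - Y t) has_real_derivative - y t) (at t within {0..T})" if "t \<in> {0..T}" for t
        using dYt[OF TT that] by (auto intro!: derivative_eq_intros)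
      show "- Y 0 = 0" using Y0 by simp
      show "- y t = - y0 - K * - Y t + 0" if "t \<in> {0..T}" for t
        using prel[OF that] pz[OF that] by simp
    qed simp
    moreover have "y T = y0 - K * Y T" using prel[OF TT] pT by simp
    ultimately show ?thesis by (simp add: algebra_simps)
  qed
  have hT: "(h has_integral p T) {0..T}" using hI[OF TT] prel[OF TT] by simp
  have eT: "y T \<ge> (y0 + p T) * exp (-K*T) \<and> p T \<ge> 0" by (rule est[OF TT nnT])
  show ?thesis
    using pos eT last hT unfolding p_def h_def by blast
qed

lemma ae_zero:
  fixes h :: "real \<Rightarrow> real"
  assumes hI: "(h has_integral P) {0..T}" and nn: "\<And>x. x \<in> {0..T} \<Longrightarrow> h x \<ge> 0"
  shows "P = 0 \<longleftrightarrow> (AE x in lborel. x \<in> {0..T} \<longrightarrow> h x = 0)"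
proof -
  have ai: "set_integrable lebesgue {0..T} h"
    using nonnegative_absolutely_integrable_1[of h "{0..T}"] hI nn by blast
  have "P = integral {0..T} h" using hI by (simp add: integral_unique)
  also have "\<dots> = (LINT x:{0..T}|lebesgue. h x)"
    using set_lebesgue_integral_eq_integral(2)[OF ai] by simp
  also have "\<dots> = integral\<^sup>L lebesgue (\<lambda>x. indicator {0..T} x *\<^sub>R h x)"
    by (simp add: set_lebesgue_integral_def)
  finally have Pe: "P = integral\<^sup>L lebesgue (\<lambda>x. indicator {0..T} x *\<^sub>R h x)" .
  have "integral\<^sup>L lebesgue (\<lambda>x. indicator {0..T} x *\<^sub>R h x) = 0 \<longleftrightarrow>
        (AE x in lebesgue. indicator {0..T} x *\<^sub>R h x = 0)"
    using ai unfolding set_integrable_def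
    by (intro integral_nonneg_eq_0_iff_AE) (auto intro!: AE_I2 simp: indicator_def nn)
  also have "\<dots> \<longleftrightarrow> (AE x in lborel. indicator {0..T} x *\<^sub>R h x = 0)"
    by (rule AE_completion_iff)
  also have "\<dots> \<longleftrightarrow> (AE x in lborel. x \<in> {0..T} \<longrightarrow> h x = 0)"
    by (intro AE_cong) (auto simp: indicator_def)
  finally show ?thesis using Pe by simp
qed


lemma traj_bar:
  assumes tr: "is_traj T b1 b2 x1 x2 \<eta>1 \<eta>2"
  shows "\<And>t. t \<in> {0..T} \<Longrightarrow> ((\<lambda>s. - ((b1 s + b2 s) / 2 * ((\<eta>1 s + \<eta>2 s) / 2))) has_integral
             ((\<eta>1 t + \<eta>2 t) / 2 - (x1 + x2) / 2)) {0..t}"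
    and "continuous_on {0..T} (\<lambda>t. (\<eta>1 t + \<eta>2 t) / 2)"
proof -
  fix t assume t: "t \<in> {0..T}"
  from tr t have i1: "((\<lambda>s. - \<eta>1 s + (1 - b1 s) * ((\<eta>1 s + \<eta>2 s) / 2)) has_integral (\<eta>1 t - x1)) {0..t}"
    and i2: "((\<lambda>s. - \<eta>2 s + (1 - b2 s) * ((\<eta>1 s + \<eta>2 s) / 2)) has_integral (\<eta>2 t - x2)) {0..t}"
    unfolding is_traj_def by auto
  have "((\<lambda>s. (- \<eta>1 s + (1 - b1 s) * ((\<eta>1 s + \<eta>2 s) / 2) + (- \<eta>2 s + (1 - b2 s) * ((\<eta>1 s + \<eta>2 s) / 2))) * (1/2))
      has_integral ((\<eta>1 t - x1 + (\<eta>2 t - x2)) * (1/2))) {0..t}"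
    by (intro has_integral_mult_left has_integral_add i1 i2)
  moreover have "(\<lambda>s. (- \<eta>1 s + (1 - b1 s) * ((\<eta>1 s + \<eta>2 s) / 2) + (- \<eta>2 s + (1 - b2 s) * ((\<eta>1 s + \<eta>2 s) / 2))) * (1/2))
     = (\<lambda>s. - ((b1 s + b2 s) / 2 * ((\<eta>1 s + \<eta>2 s) / 2)))"
    by (auto simp: fun_eq_iff field_simps)
  moreover have "(\<eta>1 t - x1 + (\<eta>2 t - x2)) * (1/2) = (\<eta>1 t + \<eta>2 t) / 2 - (x1 + x2) / 2" by (simp add: field_simps)
  ultimately show "((\<lambda>s. - ((b1 s + b2 s) / 2 * ((\<eta>1 s + \<eta>2 s) / 2))) has_integral
             ((\<eta>1 t + \<eta>2 t) / 2 - (x1 + x2) / 2)) {0..t}" by metis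
next
  show "continuous_on {0..T} (\<lambda>t. (\<eta>1 t + \<eta>2 t) / 2)"
    using tr unfolding is_traj_def by (auto intro!: continuous_intros)
qed

lemma facts:
  fixes K xb :: real
  assumes T: "T > 0" and M: "0 < M" and K: "K = M/2" and xb: "xb = (x1+x2)/2" "xb > 0"
    and adm: "admissible T M b1 b2" and tr: "is_traj T b1 b2 x1 x2 \<eta>1 \<eta>2"
  shows "(\<eta>1 T + \<eta>2 T) / 2 \<ge> (xb + integral {0..T} (\<lambda>s. (K - (b1 s + b2 s) / 2) * ((\<eta>1 s + \<eta>2 s) / 2))) * exp (-K*T)
    \<and> integral {0..T} (\<lambda>s. (K - (b1 s + b2 s) / 2) * ((\<eta>1 s + \<eta>2 s) / 2)) \<ge> 0
    \<and> (integral {0..T} (\<lambda>s. (K - (b1 s + b2 s) / 2) * ((\<eta>1 s + \<eta>2 s) / 2)) = 0 \<longleftrightarrow>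
         (AE t in lborel. t \<in> {0..T} \<longrightarrow> b1 t + b2 t = M))
    \<and> (integral {0..T} (\<lambda>s. (K - (b1 s + b2 s) / 2) * ((\<eta>1 s + \<eta>2 s) / 2)) = 0 \<longrightarrow>
         (\<eta>1 T + \<eta>2 T) / 2 \<le> xb * exp (-K*T))"
proof -
  define y where "y = (\<lambda>t. (\<eta>1 t + \<eta>2 t) / 2)"
  define g where "g = (\<lambda>t. (b1 t + b2 t) / 2)"
  have gb: "0 \<le> g t \<and> g t \<le> K" if "t \<in> {0..T}" for t
    using adm that unfolding admissible_def g_def K by fastforce
  have B: "(\<forall>t\<in>{0..T}. y t > 0) \<and> ((\<lambda>s. (K - g s) * y s) has_integral integral {0..T} (\<lambda>s. (K - g s) * y s)) {0..T}
     \<and> y T \<ge> (xb + integral {0..T} (\<lambda>s. (K - g s) * y s)) * exp (-K*T)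
     \<and> integral {0..T} (\<lambda>s. (K - g s) * y s) \<ge> 0
     \<and> (integral {0..T} (\<lambda>s. (K - g s) * y s) = 0 \<longrightarrow> y T \<le> xb * exp (-K*T))"
  proof (rule bound)
    show "0 < K" using M K by simp
    show "0 \<le> T" using T by simp
    show "continuous_on {0..T} y" unfolding y_def by (rule traj_bar(2)[OF tr])
    show "((\<lambda>s. - (g s * y s)) has_integral y t - xb) {0..t}" if "t \<in> {0..T}" for t
      using traj_bar(1)[OF tr that] unfolding y_def g_def xb by simp
    show "0 \<le> g t \<and> g t \<le> K" if "t \<in> {0..T}" for t using gb[OF that] .
    show "0 < xb" by (rule xb(2))
  qed
  have pos: "\<forall>t\<in>{0..T}. y t > 0" using B by blast
  have ae: "integral {0..T} (\<lambda>s. (K - g s) * y s) = 0 \<longleftrightarrow>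
      (AE x in lborel. x \<in> {0..T} \<longrightarrow> (K - g x) * y x = 0)"
  proof (rule ae_zero)
    show "((\<lambda>s. (K - g s) * y s) has_integral integral {0..T} (\<lambda>s. (K - g s) * y s)) {0..T}"
      using B by blast
    show "0 \<le> (K - g x) * y x" if "x \<in> {0..T}" for x
      using gb[OF that] pos that by (meson diff_ge_0_iff_ge less_imp_le mult_nonneg_nonneg)
  qed
  also have "\<dots> \<longleftrightarrow> (AE t in lborel. t \<in> {0..T} \<longrightarrow> b1 t + b2 t = M)"
  proof (intro AE_cong iffI impI)
    fix x assume "x \<in> {0..T} \<longrightarrow> (K - g x) * y x = 0" "x \<in> {0..T}"
    then have "(K - g x) * y x = 0" by simp
    moreover have "y x \<noteq> 0" using pos \<open>x \<in> {0..T}\<close> by (metis less_irrefl)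
    ultimately have "K - g x = 0" by simp
    then show "b1 x + b2 x = M" using K unfolding g_def by simp
  next
    fix x assume "x \<in> {0..T} \<longrightarrow> b1 x + b2 x = M" "x \<in> {0..T}"
    then show "(K - g x) * y x = 0" using K unfolding g_def by (auto simp: field_simps)
  qed
  finally show ?thesis using B unfolding y_def g_def by blast
qed

lemma pw: fixes c p q :: real assumes "0 \<le> c" "c \<le> 1"
  shows "\<bar>- p + c * ((p + q) / 2)\<bar> \<le> 3/2 * (\<bar>p\<bar> + \<bar>q\<bar>)"
proof -
  have a: "\<bar>c * ((p + q) / 2)\<bar> \<le> \<bar>(p + q) / 2\<bar>"
    using assms by (simp add: abs_mult mult_left_le_one_le)
  have b: "\<bar>(p + q) / 2\<bar> \<le> (\<bar>p\<bar> + \<bar>q\<bar>) / 2"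
    using abs_triangle_ineq[of p q] by simp
  have "\<bar>- p + c * ((p + q) / 2)\<bar> \<le> \<bar>- p\<bar> + \<bar>c * ((p + q) / 2)\<bar>" by (rule abs_triangle_ineq)
  also have "\<dots> \<le> \<bar>p\<bar> + (\<bar>p\<bar> + \<bar>q\<bar>) / 2" using a b by simp
  also have "\<dots> \<le> 3/2 * (\<bar>p\<bar> + \<bar>q\<bar>)" by simp
  finally show ?thesis .
qed

lemma gronwall0:
  fixes u :: "real \<Rightarrow> real"
  assumes L: "L > 0" and cu: "continuous_on {0..T} u"
    and ub: "\<And>t. t \<in> {0..T} \<Longrightarrow> 0 \<le> u t \<and> u t \<le> L * integral {0..t} u"
    and \<tau>: "\<tau> \<in> {0..T}"
  shows "u \<tau> = 0"
proof -
  define U where "U t = integral {0..t} u" for t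
  have cut: "continuous_on {0..\<tau>} u" using cu \<tau> by (auto intro: continuous_on_subset)
  have dU: "(U has_real_derivative u t) (at t within {0..\<tau>})" if "t \<in> {0..\<tau>}" for t
    using integral_has_vector_derivative[OF cut that]
    unfolding U_def[abs_def] has_real_derivative_iff_has_vector_derivative .
  define H where "H t = U t * exp (- (L * t))" for t
  have dH: "(H has_vector_derivative ((u t - L * U t) * exp (- (L * t)))) (at t within {0..\<tau>})"
    if t: "t \<in> {0..\<tau>}" for t
  proof -
    have "(H has_real_derivative (u t * exp (- (L * t)) + U t * (exp (- (L * t)) * (- L)))) (at t within {0..\<tau>})"
      unfolding H_def[abs_def] using dU[OF t] by (auto intro!: derivative_eq_intros)
    moreover have "u t * exp (- (L * t)) + U t * (exp (- (L * t)) * (- L)) = (u t - L * U t) * exp (- (L * t))"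
      by (simp add: algebra_simps)
    ultimately show ?thesis by (simp add: has_real_derivative_iff_has_vector_derivative)
  qed
  have I: "((\<lambda>t. (u t - L * U t) * exp (- (L * t))) has_integral (H \<tau> - H 0)) {0..\<tau>}"
    by (rule fundamental_theorem_of_calculus) (use \<tau> dH in auto)
  have "H \<tau> - H 0 \<le> 0"
  proof (rule has_integral_le[OF I has_integral_0])
    fix t assume t: "t \<in> {0..\<tau>}"
    then have "t \<in> {0..T}" using \<tau> by auto
    then have "u t - L * U t \<le> 0" using ub unfolding U_def by auto
    then show "(u t - L * U t) * exp (- (L * t)) \<le> 0" by (simp add: mult_nonpos_nonneg)
  qed
  then have "U \<tau> * exp (- (L * \<tau>)) \<le> 0" by (simp add: H_def U_def)
  then have "U \<tau> \<le> 0" by (simp add: mult_le_0_iff)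
  then have "L * U \<tau> \<le> 0" using L by (simp add: mult_le_0_iff)
  then show ?thesis using ub[OF \<tau>] unfolding U_def by linarith
qed

lemma uniq:
  assumes adm: "admissible T M a1 a2" and tr: "is_traj T a1 a2 x1 x2 \<xi>1 \<xi>2"
    and tr': "is_traj T a1 a2 x1 x2 \<zeta>1 \<zeta>2" and \<tau>: "\<tau> \<in> {0..T}"
  shows "\<xi>1 \<tau> = \<zeta>1 \<tau> \<and> \<xi>2 \<tau> = \<zeta>2 \<tau>"
proof -
  define u where "u t = \<bar>\<xi>1 t - \<zeta>1 t\<bar> + \<bar>\<xi>2 t - \<zeta>2 t\<bar>" for t
  have cu: "continuous_on {0..T} u"
    using tr tr' unfolding is_traj_def u_def by (auto intro!: continuous_intros)
  have key: "u t \<le> 3 * integral {0..t} u" if t: "t \<in> {0..T}" for t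
  proof -
    have cut: "continuous_on {0..t} u" using cu t by (auto intro: continuous_on_subset)
    have ui: "(\<lambda>s. 3/2 * u s) integrable_on {0..t}"
      by (intro integrable_continuous_interval continuous_intros cut)
    have c1: "0 \<le> 1 - a1 s \<and> 1 - a1 s \<le> 1" "0 \<le> 1 - a2 s \<and> 1 - a2 s \<le> 1" if "s \<in> {0..t}" for s
      using adm that t unfolding admissible_def by auto
    from tr t have i1: "((\<lambda>s. - \<xi>1 s + (1 - a1 s) * ((\<xi>1 s + \<xi>2 s) / 2)) has_integral (\<xi>1 t - x1)) {0..t}"
      and i2: "((\<lambda>s. - \<xi>2 s + (1 - a2 s) * ((\<xi>1 s + \<xi>2 s) / 2)) has_integral (\<xi>2 t - x2)) {0..t}"
      unfolding is_traj_def by auto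
    from tr' t have j1: "((\<lambda>s. - \<zeta>1 s + (1 - a1 s) * ((\<zeta>1 s + \<zeta>2 s) / 2)) has_integral (\<zeta>1 t - x1)) {0..t}"
      and j2: "((\<lambda>s. - \<zeta>2 s + (1 - a2 s) * ((\<zeta>1 s + \<zeta>2 s) / 2)) has_integral (\<zeta>2 t - x2)) {0..t}"
      unfolding is_traj_def by auto
    have d1: "((\<lambda>s. - (\<xi>1 s - \<zeta>1 s) + (1 - a1 s) * (((\<xi>1 s - \<zeta>1 s) + (\<xi>2 s - \<zeta>2 s)) / 2)) has_integral (\<xi>1 t - \<zeta>1 t)) {0..t}"
      using has_integral_diff[OF i1 j1] by (simp add: algebra_simps add_divide_distrib diff_divide_distrib)
    have d2: "((\<lambda>s. - (\<xi>2 s - \<zeta>2 s) + (1 - a2 s) * (((\<xi>2 s - \<zeta>2 s) + (\<xi>1 s - \<zeta>1 s)) / 2)) has_integral (\<xi>2 t - \<zeta>2 t)) {0..t}"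
      using has_integral_diff[OF i2 j2] by (simp add: algebra_simps add_divide_distrib diff_divide_distrib)
    have b1: "\<bar>\<xi>1 t - \<zeta>1 t\<bar> \<le> integral {0..t} (\<lambda>s. 3/2 * u s)"
    proof -
      have "norm (integral {0..t} (\<lambda>s. - (\<xi>1 s - \<zeta>1 s) + (1 - a1 s) * (((\<xi>1 s - \<zeta>1 s) + (\<xi>2 s - \<zeta>2 s)) / 2)))
          \<le> integral {0..t} (\<lambda>s. 3/2 * u s)"
      proof (rule integral_norm_bound_integral[OF _ ui])
        show "(\<lambda>s. - (\<xi>1 s - \<zeta>1 s) + (1 - a1 s) * (((\<xi>1 s - \<zeta>1 s) + (\<xi>2 s - \<zeta>2 s)) / 2)) integrable_on {0..t}"
          using d1 by blast
        fix x assume x: "x \<in> {0..t}"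
        show "norm (- (\<xi>1 x - \<zeta>1 x) + (1 - a1 x) * (((\<xi>1 x - \<zeta>1 x) + (\<xi>2 x - \<zeta>2 x)) / 2)) \<le> 3/2 * u x"
          using pw[OF c1(1)[OF x, THEN conjunct1] c1(1)[OF x, THEN conjunct2], of "\<xi>1 x - \<zeta>1 x" "\<xi>2 x - \<zeta>2 x"] unfolding u_def real_norm_def by (simp add: add.commute)
      qed
      then show ?thesis using integral_unique[OF d1] by simp
    qed
    have b2: "\<bar>\<xi>2 t - \<zeta>2 t\<bar> \<le> integral {0..t} (\<lambda>s. 3/2 * u s)"
    proof -
      have "norm (integral {0..t} (\<lambda>s. - (\<xi>2 s - \<zeta>2 s) + (1 - a2 s) * (((\<xi>2 s - \<zeta>2 s) + (\<xi>1 s - \<zeta>1 s)) / 2)))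
          \<le> integral {0..t} (\<lambda>s. 3/2 * u s)"
      proof (rule integral_norm_bound_integral[OF _ ui])
        show "(\<lambda>s. - (\<xi>2 s - \<zeta>2 s) + (1 - a2 s) * (((\<xi>2 s - \<zeta>2 s) + (\<xi>1 s - \<zeta>1 s)) / 2)) integrable_on {0..t}"
          using d2 by blast
        fix x assume x: "x \<in> {0..t}"
        show "norm (- (\<xi>2 x - \<zeta>2 x) + (1 - a2 x) * (((\<xi>2 x - \<zeta>2 x) + (\<xi>1 x - \<zeta>1 x)) / 2)) \<le> 3/2 * u x"
          using pw[OF c1(2)[OF x, THEN conjunct1] c1(2)[OF x, THEN conjunct2], of "\<xi>2 x - \<zeta>2 x" "\<xi>1 x - \<zeta>1 x"] unfolding u_def real_norm_def by (simp add: add.commute)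
      qed
      then show ?thesis using integral_unique[OF d2] by simp
    qed
    have "integral {0..t} (\<lambda>s. 3/2 * u s) = 3/2 * integral {0..t} u" by simp
    then show ?thesis using b1 b2 unfolding u_def by simp
  qed
  have "u \<tau> = 0"
  proof (rule gronwall0[of 3 T u])
    show "0 \<le> u t \<and> u t \<le> 3 * integral {0..t} u" if "t \<in> {0..T}" for t
      using key[OF that] unfolding u_def by simp
  qed (use cu \<tau> in auto)
  then have "\<bar>\<xi>1 \<tau> - \<zeta>1 \<tau>\<bar> = 0 \<and> \<bar>\<xi>2 \<tau> - \<zeta>2 \<tau>\<bar> = 0"
    unfolding u_def by (simp add: add_nonneg_eq_0_iff)
  then show ?thesis by simp
qed

theorem proposition5:
  fixes T M x1 x2 :: real and a1 a2 \<xi>1 \<xi>2 :: "real \<Rightarrow> real"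
  assumes "T > 0" and "0 < M" and "M \<le> 2"
    and "(x1 + x2) / 2 > 0" and "x1 = x2"
    and "admissible T M a1 a2"
    and "is_traj T a1 a2 x1 x2 \<xi>1 \<xi>2"
  shows "optimal T M x1 x2 a1 a2 \<longleftrightarrow>
           ((AE t in lborel. t \<in> {0..T} \<longrightarrow> a1 t + a2 t = M) \<and> \<xi>1 T = \<xi>2 T)"
proof -
  note T = assms(1) and M = assms(2) and M2 = assms(3) and adm = assms(6) and tr = assms(7)
  define xb where "xb = (x1+x2)/2"
  define K where "K = M/2"
  define E where "E = xb * exp (-K*T)"
  have xb: "xb > 0" using assms(4) xb_def by simp
  have E: "E > 0" using xb unfolding E_def by simp
  have costeq: "cost T f1 f2 = ((f1 T + f2 T)/2)^2 + (f1 T - f2 T)^2 / 4" for f1 f2 :: "real \<Rightarrow> real"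
    unfolding cost_def by (simp add: power2_eq_square field_simps)
  have F: "((\<eta>1 T + \<eta>2 T) / 2 \<ge> E) \<and> cost T \<eta>1 \<eta>2 \<ge> E^2"
    if "admissible T M b1 b2" "is_traj T b1 b2 x1 x2 \<eta>1 \<eta>2" for b1 b2 \<eta>1 \<eta>2
  proof -
    from facts[OF T M K_def xb_def xb that] have
      "(\<eta>1 T + \<eta>2 T) / 2 \<ge> (xb + integral {0..T} (\<lambda>s. (K - (b1 s + b2 s) / 2) * ((\<eta>1 s + \<eta>2 s) / 2))) * exp (-K*T)"
      "integral {0..T} (\<lambda>s. (K - (b1 s + b2 s) / 2) * ((\<eta>1 s + \<eta>2 s) / 2)) \<ge> 0" by auto
    moreover have "xb * exp (-K*T) \<le> (xb + integral {0..T} (\<lambda>s. (K - (b1 s + b2 s) / 2) * ((\<eta>1 s + \<eta>2 s) / 2))) * exp (-K*T)"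
      using calculation(2) by (intro mult_right_mono) auto
    ultimately have y: "(\<eta>1 T + \<eta>2 T) / 2 \<ge> E" unfolding E_def by linarith
    have "((\<eta>1 T + \<eta>2 T) / 2)^2 \<ge> E^2" using power_mono[OF y less_imp_le[OF E], of 2] .
    then show ?thesis using y costeq[of \<eta>1 \<eta>2] zero_le_power2[of "\<eta>1 T - \<eta>2 T"] by linarith
  qed
  from facts[OF T M K_def xb_def xb adm tr] obtain P where
    P1: "(\<xi>1 T + \<xi>2 T) / 2 \<ge> (xb + P) * exp (-K*T)" and P2: "P \<ge> 0"
    and P3: "P = 0 \<longleftrightarrow> (AE t in lborel. t \<in> {0..T} \<longrightarrow> a1 t + a2 t = M)"
    and P4: "P = 0 \<longrightarrow> (\<xi>1 T + \<xi>2 T) / 2 \<le> E"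
    unfolding E_def by blast
  show ?thesis
  proof
    assume opt: "optimal T M x1 x2 a1 a2"
    define \<eta> where "\<eta> t = xb * exp (-K*t)" for t
    have admK: "admissible T M (\<lambda>_. K) (\<lambda>_. K)"
      unfolding admissible_def set_borel_measurable_def K_def using M M2 by auto
    have trK: "is_traj T (\<lambda>_. K) (\<lambda>_. K) x1 x2 \<eta> \<eta>"
      unfolding is_traj_def
    proof (intro conjI ballI)
      show "\<eta> 0 = x1" "\<eta> 0 = x2" using assms(5) by (auto simp: \<eta>_def xb_def)
      show "continuous_on {0..T} \<eta>" unfolding \<eta>_def by (intro continuous_intros)
      then show "continuous_on {0..T} \<eta>" .
      fix t assume t: "t \<in> {0..T}"
      have "((\<lambda>s. - (K * (xb * exp (- (K * s))))) has_integral (\<eta> t - \<eta> 0)) {0..t}"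
      proof (rule fundamental_theorem_of_calculus)
        show "0 \<le> t" using t by simp
        show "(\<eta> has_vector_derivative - (K * (xb * exp (- (K * x))))) (at x within {0..t})" for x
          unfolding \<eta>_def has_real_derivative_iff_has_vector_derivative[symmetric]
          by (auto intro!: derivative_eq_intros)
      qed
      moreover have "(\<lambda>s. - (K * (xb * exp (- (K * s))))) = (\<lambda>s. - \<eta> s + (1 - K) * ((\<eta> s + \<eta> s) / 2))"
        by (auto simp: fun_eq_iff \<eta>_def algebra_simps)
      moreover have "\<eta> 0 = x1" "\<eta> 0 = x2" using assms(5) by (auto simp: \<eta>_def xb_def)
      ultimately show "((\<lambda>s. - \<eta> s + (1 - K) * ((\<eta> s + \<eta> s) / 2)) has_integral \<eta> t - x1) {0..t}"
         "((\<lambda>s. - \<eta> s + (1 - K) * ((\<eta> s + \<eta> s) / 2)) has_integral \<eta> t - x2) {0..t}" by auto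
    qed
    have "cost T \<xi>1 \<xi>2 \<le> cost T \<eta> \<eta>" using opt admK trK tr unfolding optimal_def by blast
    also have "cost T \<eta> \<eta> = E^2" unfolding cost_def \<eta>_def E_def by simp
    finally have c: "cost T \<xi>1 \<xi>2 \<le> E^2" .
    have ge: "(\<xi>1 T + \<xi>2 T) / 2 \<ge> E" and cge: "cost T \<xi>1 \<xi>2 \<ge> E^2" using F[OF adm tr] by auto
    have sq: "((\<xi>1 T + \<xi>2 T) / 2)^2 \<ge> E^2" using power_mono[OF ge less_imp_le[OF E], of 2] .
    have d: "(\<xi>1 T - \<xi>2 T)^2 = 0" using c sq costeq[of \<xi>1 \<xi>2] zero_le_power2[of "\<xi>1 T - \<xi>2 T"]
      by linarith
    have "((\<xi>1 T + \<xi>2 T) / 2)^2 \<le> cost T \<xi>1 \<xi>2" unfolding costeq by simp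
    hence "((\<xi>1 T + \<xi>2 T) / 2)^2 \<le> E^2" using c by (rule order_trans)
    hence "(\<xi>1 T + \<xi>2 T) / 2 \<le> E" by (rule power2_le_imp_le) (use E in simp)
    hence "(xb + P) * exp (-K*T) \<le> xb * exp (-K*T)" using P1 unfolding E_def by linarith
    hence "P \<le> 0" by simp
    hence "P = 0" using P2 by simp
    then show "(AE t in lborel. t \<in> {0..T} \<longrightarrow> a1 t + a2 t = M) \<and> \<xi>1 T = \<xi>2 T"
      using P3 d by simp
  next
    assume H: "(AE t in lborel. t \<in> {0..T} \<longrightarrow> a1 t + a2 t = M) \<and> \<xi>1 T = \<xi>2 T"
    then have "P = 0" using P3 by simp
    then have "(\<xi>1 T + \<xi>2 T) / 2 = E" using P4 P1 unfolding E_def by simp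
    then have cx: "cost T \<xi>1 \<xi>2 = E^2" using costeq[of \<xi>1 \<xi>2] H by simp
    show "optimal T M x1 x2 a1 a2"
      unfolding optimal_def
    proof (intro conjI allI impI adm)
      fix \<zeta>1 \<zeta>2 b1 b2 \<eta>1 \<eta>2
      assume A: "is_traj T a1 a2 x1 x2 \<zeta>1 \<zeta>2 \<and> admissible T M b1 b2 \<and> is_traj T b1 b2 x1 x2 \<eta>1 \<eta>2"
      have tr': "is_traj T a1 a2 x1 x2 \<zeta>1 \<zeta>2" using A by blast
      have TT: "T \<in> {0..T}" using T by simp
      have "\<xi>1 T = \<zeta>1 T \<and> \<xi>2 T = \<zeta>2 T" by (rule uniq[OF adm tr tr' TT])
      then have "cost T \<zeta>1 \<zeta>2 = cost T \<xi>1 \<xi>2" by (simp add: cost_def)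
      also have "\<dots> = E^2" by (rule cx)
      also have "\<dots> \<le> cost T \<eta>1 \<eta>2" using F[of b1 b2 \<eta>1 \<eta>2] A by blast
      finally show "cost T \<zeta>1 \<zeta>2 \<le> cost T \<eta>1 \<eta>2" .
    qed
  qed
qed

end
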